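(* Let $q$ be a prime power and let $\mathcal C\subseteq\mathbb F_q^n$ be an $\mathbb F_q$-linear code of dimension $k\ge 1$ with $4\le d_I(\mathcal C)\le 2n-2$. Then $d_I(\mathcal C)\le 2n-2k$.
   Context: For $\mathbf u,\mathbf v\in\mathbb F_q^n$, the insdel distance $d_I(\mathbf u,\mathbf v)$ is the minimum number of insertions and deletions transforming $\mathbf u$ into $\mathbf v$; equivalently $d_I(\mathbf u,\mathbf v)=2n-2\ell_{\rm LCS}(\mathbf u,\mathbf v)$ where $\ell_{\rm LCS}$ is the length of a longest common subsequence. $d_I(\mathcal C)$ is the minimum insdel distance between distinct codewords. *)

theory Defs
  imports Main "HOL.Vector_Spaces" "HOL-Library.Function_Algebras" "HOL-Library.Sublist"
begin

text \<open>Vectors of F_q^n are represented as functions nat => 'a vanishing at all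
  positions >= n; the word of such a vector is its list of the first n entries.
  F_q is an arbitrary finite field (its order q is automatically a prime power).\<close>

definition vscale :: "'a::field \<Rightarrow> (nat \<Rightarrow> 'a) \<Rightarrow> (nat \<Rightarrow> 'a)" where
  "vscale c u = (\<lambda>i. c * u i)"

definition Fqn :: "nat \<Rightarrow> (nat \<Rightarrow> 'a::field) set" where
  "Fqn n = {u. \<forall>i\<ge>n. u i = 0}"

definition word :: "nat \<Rightarrow> (nat \<Rightarrow> 'a) \<Rightarrow> 'a list" where
  "word n u = map u [0..<n]"

definition linear_code :: "nat \<Rightarrow> (nat \<Rightarrow> 'a::field) set \<Rightarrow> bool" where
  "linear_code n C \<longleftrightarrow> C \<subseteq> Fqn n \<and> Modules.module.subspace vscale C"

definition code_dim :: "(nat \<Rightarrow> 'a::field) set \<Rightarrow> nat" where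
  "code_dim C = Vector_Spaces.vector_space.dim vscale C"

definition lcs_len :: "'a list \<Rightarrow> 'a list \<Rightarrow> nat" where
  "lcs_len xs ys = Max {length zs | zs. subseq zs xs \<and> subseq zs ys}"

definition insdel_dist :: "nat \<Rightarrow> (nat \<Rightarrow> 'a) \<Rightarrow> (nat \<Rightarrow> 'a) \<Rightarrow> nat" where
  "insdel_dist n u v = 2 * n - 2 * lcs_len (word n u) (word n v)"

definition min_insdel :: "nat \<Rightarrow> (nat \<Rightarrow> 'a) set \<Rightarrow> nat" where
  "min_insdel n C = Min {insdel_dist n u v | u v. u \<in> C \<and> v \<in> C \<and> u \<noteq> v}"

end

theory Submission imports Defs "HOL-Library.FuncSet" begin

lemma vs: "vector_space (vscale :: 'a::field \<Rightarrow> _)"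
  by unfold_locales (auto simp: vscale_def algebra_simps fun_eq_iff)

lemma finite_Fqn: "finite (Fqn n :: (nat \<Rightarrow> 'a::{field,finite}) set)"
proof -
  have inj: "inj_on (word n) (Fqn n :: (nat \<Rightarrow> 'a) set)"
  proof (rule inj_onI)
    fix u v :: "nat \<Rightarrow> 'a" assume u: "u \<in> Fqn n" and v: "v \<in> Fqn n" and e: "word n u = word n v"
    show "u = v"
    proof
      fix i show "u i = v i"
      proof (cases "i < n")
        case True
        have "\<forall>x\<in>{0..<n}. u x = v x" using e unfolding word_def by simp
        then show ?thesis using True by simp
      next
        case False then show ?thesis using u v by (simp add: Fqn_def)
      qed
    qed
  qed
  have "word n ` Fqn n \<subseteq> {xs. set xs \<subseteq> (UNIV::'a set) \<and> length xs = n}"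
    by (auto simp: word_def)
  then have "finite (word n ` (Fqn n :: (nat \<Rightarrow> 'a) set))"
    by (rule finite_subset[OF _ finite_lists_length_eq[OF finite_UNIV]])
  then show ?thesis by (rule finite_imageD[OF _ inj])
qed

lemma card_bound:
  fixes C :: "(nat \<Rightarrow> 'a::{field,finite}) set"
  assumes lc: "linear_code n C" and dk: "code_dim C = k" and k1: "k \<ge> 1"
  shows "card (UNIV::'a set)^k \<le> card C"
proof -
  interpret V: vector_space "vscale :: 'a \<Rightarrow> (nat \<Rightarrow> 'a) \<Rightarrow> _" by (rule vs)
  have sub: "V.subspace C" and CF: "C \<subseteq> Fqn n" using lc by (auto simp: linear_code_def)
  have finC: "finite C" using CF finite_Fqn finite_subset by blast
  obtain B where BC: "B \<subseteq> C" and ind: "V.independent B" and "C \<subseteq> V.span B" and cB: "card B = V.dim C"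
    by (rule V.basis_exists)
  have cB2: "card B = k" using cB dk by (simp add: code_dim_def)
  have finB: "finite B" using cB2 k1 by (intro card_ge_0_finite) simp
  define g where "g f = (\<Sum>b\<in>B. vscale (f b) b)" for f
  have gC: "g ` (PiE B (\<lambda>_. UNIV)) \<subseteq> C"
  proof (rule image_subsetI)
    fix f :: "(nat \<Rightarrow> 'a) \<Rightarrow> 'a"
    show "g f \<in> C" unfolding g_def
    proof (rule V.subspace_sum[OF sub])
      fix b assume "b \<in> B"
      then have "b \<in> C" using BC by blast
      then show "vscale (f b) b \<in> C" by (rule V.subspace_scale[OF sub])
    qed
  qed
  have inj: "inj_on g (PiE B (\<lambda>_. UNIV))"
  proof (rule inj_onI)
    fix f1 f2 assume f1: "f1 \<in> PiE B (\<lambda>_. UNIV)" and f2: "f2 \<in> PiE B (\<lambda>_. UNIV)" and e: "g f1 = g f2"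
    have "(\<Sum>b\<in>B. vscale (f1 b - f2 b) b) = g f1 - g f2"
      unfolding g_def by (simp add: V.scale_left_diff_distrib sum_subtractf)
    then have "(\<Sum>b\<in>B. vscale (f1 b - f2 b) b) = 0" using e by simp
    then have "\<forall>b\<in>B. f1 b - f2 b = 0"
      using V.independentD[OF ind finB order_refl, where u="\<lambda>b. f1 b - f2 b"] by blast
    then show "f1 = f2" using f1 f2 by (intro PiE_ext) auto
  qed
  have "card (PiE B (\<lambda>_. UNIV::'a set)) = card (UNIV::'a set)^k"
    using finB cB2 by (simp add: card_PiE)
  moreover have "card (PiE B (\<lambda>_. UNIV::'a set)) \<le> card C"
    using card_inj_on_le[OF inj gC finC] .
  ultimately show ?thesis by simp
qed


lemma lcs_ge:
  assumes "subseq zs xs" "subseq zs ys"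
  shows "length zs \<le> lcs_len xs ys"
proof -
  have "{length zs | zs. subseq zs xs \<and> subseq zs ys} \<subseteq> {..length xs}"
    using list_emb_length by fastforce
  then have "finite {length zs | zs. subseq zs xs \<and> subseq zs ys}"
    using finite_subset by blast
  then show ?thesis unfolding lcs_len_def using assms by (intro Max_ge) auto
qed

lemma min_le:
  assumes "u \<in> C" "v \<in> C" "u \<noteq> v" "subseq zs (word n u)" "subseq zs (word n v)" "m \<le> length zs"
  shows "min_insdel n C \<le> 2 * n - 2 * m"
proof -
  have fin: "finite {insdel_dist n u v | u v. u \<in> C \<and> v \<in> C \<and> u \<noteq> v}"
    by (rule finite_subset[of _ "{..2*n}"]) (auto simp: insdel_dist_def)
  have "min_insdel n C \<le> insdel_dist n u v"
    unfolding min_insdel_def using assms(1-3) by (intro Min_le[OF fin]) auto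
  also have "\<dots> \<le> 2 * n - 2 * m"
    using lcs_ge[OF assms(4,5)] assms(6) unfolding insdel_dist_def by linarith
  finally show ?thesis .
qed

lemma word_split: "m \<le> n \<Longrightarrow> word n u = map u [0..<m] @ map u [m..<n]"
  unfolding word_def using upt_add_eq_append[of 0 m "n-m"] by simp

lemma subseq_prefix: "subseq xs (xs @ ys)"
  by (metis append_Nil2 subseq_append' list_emb_Nil)

lemma pigeon:
  fixes C :: "(nat \<Rightarrow> 'a::finite) set"
  assumes finC: "finite C" and big: "card (UNIV::'a set) ^ m < card C"
  shows "\<exists>u\<in>C. \<exists>v\<in>C. u \<noteq> v \<and> map u [0..<m] = map v [0..<m]"
proof (rule ccontr)
  assume "\<not> ?thesis"
  then have inj: "inj_on (\<lambda>u. map u [0..<m]) C" by (auto simp: inj_on_def)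
  have "(\<lambda>u. map u [0..<m]) ` C \<subseteq> {xs. set xs \<subseteq> (UNIV::'a set) \<and> length xs = m}" by auto
  then have "card ((\<lambda>u. map u [0..<m]) ` C) \<le> card (UNIV::'a set) ^ m"
    using card_mono[OF finite_lists_length_eq[of "UNIV::'a set" m]] card_lists_length_eq[of "UNIV::'a set" m]
    by simp
  then show False using card_image[OF inj] big by simp
qed

theorem corollary3p7:
  fixes C :: "(nat \<Rightarrow> 'a::{field,finite}) set" and n k :: nat
  assumes "linear_code n C"
    and "code_dim C = k"
    and "k \<ge> 1"
    and "4 \<le> min_insdel n C"
    and "min_insdel n C \<le> 2 * n - 2"
  shows "min_insdel n C \<le> 2 * n - 2 * k"
proof (cases "k = 1")
  case True then show ?thesis using assms(5) by simp
next
  case False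
  then have k2: "k \<ge> 2" using assms(3) by simp
  interpret V: vector_space "vscale :: 'a \<Rightarrow> (nat \<Rightarrow> 'a) \<Rightarrow> _" by (rule vs)
  have sub: "V.subspace C" and CF: "C \<subseteq> Fqn n" using assms(1) by (auto simp: linear_code_def)
  have finC: "finite C" using CF finite_Fqn finite_subset by blast
  have cb: "card (UNIV::'a set) ^ k \<le> card C" using card_bound[OF assms(1,2,3)] .
  have q2: "card (UNIV::'a set) \<ge> 2"
  proof -
    have "{0::'a, 1} \<subseteq> UNIV" by simp
    then have "card {0::'a,1} \<le> card (UNIV::'a set)" by (rule card_mono[OF finite])
    then show ?thesis by simp
  qed
  have n1: "n \<ge> 1" using assms(4,5) by linarith
  have kn: "k \<le> n - 1"
  proof (rule ccontr)
    assume "\<not> k \<le> n - 1"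
    then have "card (UNIV::'a set) ^ (n-1) < card (UNIV::'a set) ^ k"
      using q2 by (intro power_strict_increasing) auto
    then obtain u v where uv: "u \<in> C" "v \<in> C" "u \<noteq> v" "map u [0..<n-1] = map v [0..<n-1]"
      using pigeon[OF finC, of "n-1"] cb by fastforce
    have "subseq (map u [0..<n-1]) (word n u)" using word_split[of "n-1" n u] subseq_prefix by simp
    moreover have "subseq (map v [0..<n-1]) (word n v)" using word_split[of "n-1" n v] subseq_prefix by simp
    then have "subseq (map u [0..<n-1]) (word n v)" using uv(4) by (simp only:)
    ultimately have "min_insdel n C \<le> 2 * n - 2 * (n-1)"
      using min_le[OF uv(1-3), of "map u [0..<n-1]" n "n-1"] by simp
    then show False using assms(4) n1 by linarith
  qed
  show ?thesis
  proof (cases "\<exists>u\<in>C. \<exists>v\<in>C. u \<noteq> v \<and> map u [0..<k] = map v [0..<k]")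
    case True
    then obtain u v where uv: "u \<in> C" "v \<in> C" "u \<noteq> v" "map u [0..<k] = map v [0..<k]" by blast
    have "subseq (map u [0..<k]) (word n u)" using word_split[of k n u] subseq_prefix kn by simp
    moreover have "subseq (map v [0..<k]) (word n v)" using word_split[of k n v] subseq_prefix kn by simp
    then have "subseq (map u [0..<k]) (word n v)" using uv(4) by (simp only:)
    ultimately show ?thesis
      using min_le[OF uv(1-3), of "map u [0..<k]" n k] by simp
  next
    case False
    then have inj: "inj_on (\<lambda>u. map u [0..<k]) C" by (auto simp: inj_on_def)
    let ?T = "{xs. set xs \<subseteq> (UNIV::'a set) \<and> length xs = k}"
    have sub1: "(\<lambda>u. map u [0..<k]) ` C \<subseteq> ?T" by auto
    have "card ?T \<le> card ((\<lambda>u. map u [0..<k]) ` C)"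
      using card_lists_length_eq[of "UNIV::'a set" k] card_image[OF inj] cb by simp
    then have eqT: "(\<lambda>u. map u [0..<k]) ` C = ?T"
      using card_seteq[OF finite_lists_length_eq[of "UNIV::'a set" k] sub1] by simp
    have surj: "\<exists>u\<in>C. map u [0..<k] = xs" if "length xs = k" for xs
    proof -
      have "xs \<in> ?T" using that by simp
      then show ?thesis using eqT by (metis (no_types, lifting) imageE)
    qed
    obtain v where v: "v \<in> C" "map v [0..<k] = 1 # replicate (k-1) 0"
      using surj[of "1 # replicate (k-1) 0"] k2 by auto
    have v0: "v 0 = 1"
    proof -
      have "map v [0..<k] ! 0 = v 0" using k2 by simp
      then show ?thesis using v(2) by simp
    qed
    have wv: "word n v = (1 # replicate (k-1) 0 @ [v k]) @ map v [Suc k..<n]"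
      using word_split[of "Suc k" n v] kn n1 v(2) by simp
    show ?thesis
    proof (cases "v k = 0")
      case True
      have z: "(0::nat\<Rightarrow>'a) \<in> C" using V.subspace_0[OF sub] .
      have "v \<noteq> 0" using v0 by auto
      have w0: "word n (0::nat\<Rightarrow>'a) = replicate k 0 @ replicate (n-k) 0"
        unfolding word_def using kn by (simp add: replicate_add[symmetric] zero_fun_def map_replicate_const)
      have s1: "subseq (replicate k (0::'a)) (word n v)"
      proof -
        obtain j where j: "k = Suc j" using k2 by (cases k) auto
        have "replicate (k-1) (0::'a) @ [0] = replicate k 0"
          using j by (simp add: replicate_append_same)
        then have "word n v = 1 # (replicate k 0 @ map v [Suc k..<n])" using wv True by simp
        then show ?thesis by (simp add: list_emb_Cons subseq_prefix)
      qed
      show ?thesis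
        using min_le[OF v(1) z \<open>v \<noteq> 0\<close> s1, of k] w0 subseq_prefix[of "replicate k (0::'a)" "replicate (n - k) 0"] by simp
    next
      case False
      obtain u where u: "u \<in> C" "map u [0..<k] = replicate (k-1) 0 @ [v k]"
        using surj[of "replicate (k-1) 0 @ [v k]"] k2 by auto
      have u0: "u 0 = 0"
      proof -
        have "map u [0..<k] ! 0 = u 0" using k2 by simp
        then show ?thesis using u(2) k2 by (simp add: nth_append)
      qed
      have "u \<noteq> v" using u0 v0 by auto
      have s1: "subseq (replicate (k-1) 0 @ [v k]) (word n u)"
      proof -
        have "word n u = (replicate (k-1) 0 @ [v k]) @ map u [k..<n]"
          using word_split[of k n u] kn n1 u(2) by simp
        then show ?thesis by (simp only: subseq_prefix)
      qed
      have s2: "subseq (replicate (k-1) 0 @ [v k]) (word n v)"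
        unfolding wv append_Cons by (rule list_emb_Cons) (rule subseq_prefix)
      have len: "k \<le> length (replicate (k-1) (0::'a) @ [v k])" using k2 by simp
      show ?thesis
        using min_le[OF u(1) v(1) \<open>u \<noteq> v\<close> s1 s2 len] .
    qed
  qed
qed

end
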